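(* (a) $\mathcal{L}\cap\mathcal{U}=\mathcal{C}$. (b) If $A\subseteq\Omega$ satisfies $A\in\mathcal{L}$ and $\Omega\setminus A\in\mathcal{L}$, then $A\in\mathcal{C}$.
   Context: $\Omega$ is the set of infinite sequences $\alpha_0\alpha_1\alpha_2\cdots$ with $\alpha_k\in\{0,1\}$ and $\alpha_0=0$. $\mathcal{C}$ is the collection of cylinder sets, i.e. sets of the form $\{\alpha_0\alpha_1\cdots\in\Omega:\alpha_0\cdots\alpha_n\in E\}$ for some $n\ge1$ and some set $E$ of strings $\alpha_0\cdots\alpha_n$ with $\alpha_0=0$. For $A\subseteq\Omega$ and $n\ge0$, $A^{(n)}=\{\omega\in\Omega:\text{some }\omega'\in A\text{ has the same first }n+1\text{ entries as }\omega\}$. $\mathcal{L}$ is the collection of lower sets, those $A$ with $A=\bigcap_nA^{(n)}$; $\mathcal{U}$ is the collection of upper sets, those $A$ with $A=\bigcup_n\big(\Omega\setminus(\Omega\setminus A)^{(n)}\big)$. *)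

theory Defs
  imports Main
begin

text \<open>Binary digits are encoded as booleans: 0 = False, 1 = True.
  A sequence alpha_0 alpha_1 ... is a function nat => bool.\<close>

definition Omega :: "(nat \<Rightarrow> bool) set" where
  "Omega = {\<omega>. \<omega> 0 = False}"

definition cylinders :: "(nat \<Rightarrow> bool) set set" where
  "cylinders = {A. \<exists>n E. n \<ge> 1 \<and>
      (\<forall>s\<in>E. length s = Suc n \<and> s ! 0 = False) \<and>
      A = {\<omega>\<in>Omega. map \<omega> [0..<Suc n] \<in> E}}"

definition trunc :: "(nat \<Rightarrow> bool) set \<Rightarrow> nat \<Rightarrow> (nat \<Rightarrow> bool) set" where
  "trunc A n = {\<omega>\<in>Omega. \<exists>\<omega>'\<in>A. \<forall>k\<le>n. \<omega>' k = \<omega> k}"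

definition lower_sets :: "(nat \<Rightarrow> bool) set set" where
  "lower_sets = {A. A \<subseteq> Omega \<and> A = (\<Inter>n. trunc A n)}"

definition upper_sets :: "(nat \<Rightarrow> bool) set set" where
  "upper_sets = {A. A \<subseteq> Omega \<and> A = (\<Union>n. Omega - trunc (Omega - A) n)}"

end

theory Submission
  imports Defs
begin

lemma unif_const:
  fixes P :: "(nat \<Rightarrow> bool) \<Rightarrow> bool"
  assumes loc: "\<And>\<omega>. \<exists>n. \<forall>\<omega>'. (\<forall>k\<le>n. \<omega> k = \<omega>' k) \<longrightarrow> P \<omega>' = P \<omega>"
  shows "\<exists>N. \<forall>\<omega> \<omega>'. (\<forall>k\<le>N. \<omega> k = \<omega>' k) \<longrightarrow> P \<omega> = P \<omega>'"
proof (rule ccontr)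
  assume nc: "\<not> ?thesis"
  define bad where "bad s \<longleftrightarrow> (\<forall>N. \<exists>\<omega> \<omega>'. (\<forall>k<length s. \<omega> k = s!k) \<and>
      (\<forall>k\<le>N. \<omega> k = \<omega>' k) \<and> P \<omega> \<noteq> P \<omega>')" for s :: "bool list"
  have b0: "bad []" using nc unfolding bad_def by auto
  have bstep: "bad (s @ [True]) \<or> bad (s @ [False])" if bs: "bad s" for s
  proof (rule ccontr)
    assume "\<not> ?thesis"
    then have nb1: "\<not> bad (s @ [True])" and nb2: "\<not> bad (s @ [False])" by auto
    from nb1 obtain N1 where
      n1: "\<forall>\<omega> \<omega>'. \<not> ((\<forall>k<length (s@[True]). \<omega> k = (s@[True])!k) \<and> (\<forall>k\<le>N1. \<omega> k = \<omega>' k) \<and> P \<omega> \<noteq> P \<omega>')"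
      using nb1[unfolded bad_def not_all not_ex] by blast
    from nb2 obtain N2 where
      n2: "\<forall>\<omega> \<omega>'. \<not> ((\<forall>k<length (s@[False]). \<omega> k = (s@[False])!k) \<and> (\<forall>k\<le>N2. \<omega> k = \<omega>' k) \<and> P \<omega> \<noteq> P \<omega>')"
      using nb2[unfolded bad_def not_all not_ex] by blast
    from bs[unfolded bad_def, rule_format, of "max N1 N2"] obtain \<omega> \<omega>' where w: "\<forall>k<length s. \<omega> k = s!k" "\<forall>k\<le>max N1 N2. \<omega> k = \<omega>' k" "P \<omega> \<noteq> P \<omega>'"
      by blast
    have pre: "\<forall>k<Suc (length s). \<omega> k = (s@[\<omega> (length s)])!k"
      using w(1) by (auto simp: nth_append less_Suc_eq)
    show False
    proof (cases "\<omega> (length s)")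
      case True
      have x1: "\<forall>k<length (s@[True]). \<omega> k = (s@[True])!k" using pre True by simp
      have x2: "\<forall>k\<le>N1. \<omega> k = \<omega>' k" using w(2) by simp
      show ?thesis using n1 x1 x2 w(3) by blast
    next
      case False
      have x1: "\<forall>k<length (s@[False]). \<omega> k = (s@[False])!k" using pre False by simp
      have x2: "\<forall>k\<le>N2. \<omega> k = \<omega>' k" using w(2) by simp
      show ?thesis using n2 x1 x2 w(3) by blast
    qed
  qed
  define f where "f = rec_nat [] (\<lambda>n l. if bad (l @ [True]) then l @ [True] else l @ [False])"
  have f0: "f 0 = []" and fS: "f (Suc n) = (if bad (f n @ [True]) then f n @ [True] else f n @ [False])" for n
    by (simp_all add: f_def)
  have fbad: "bad (f n)" for n
  proof (induction n)
    case 0 then show ?case using b0 by (simp add: f0)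
  next
    case (Suc n)
    have "bad (f n @ [True]) \<or> bad (f n @ [False])" using bstep[OF Suc.IH] .
    then show ?case by (cases "bad (f n @ [True])") (simp_all add: fS)
  qed
  have flen: "length (f n) = n" for n by (induction n) (auto simp: fS f0)
  have fpre: "\<forall>k<m. f n ! k = f m ! k" if "m \<le> n" for m n
    using that
  proof (induction n)
    case 0 then show ?case by simp
  next
    case (Suc n)
    show ?case
    proof (cases "m = Suc n")
      case True then show ?thesis by simp
    next
      case False
      then have "m \<le> n" using Suc.prems by simp
      then show ?thesis using Suc.IH flen[of n]
        by (auto simp: fS nth_append)
    qed
  qed
  define \<omega> where "\<omega> k = f (Suc k) ! k" for k
  have wpre: "\<forall>k<n. \<omega> k = f n ! k" for n
  proof (intro allI impI)
    fix k assume "k < n"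
    then have "Suc k \<le> n" by simp
    then show "\<omega> k = f n ! k" using fpre[of "Suc k" n] unfolding \<omega>_def by simp
  qed
  obtain n0 where n0: "\<forall>\<omega>'. (\<forall>k\<le>n0. \<omega> k = \<omega>' k) \<longrightarrow> P \<omega>' = P \<omega>" using loc by blast
  from fbad[of "Suc n0", unfolded bad_def flen, rule_format, of n0] obtain \<omega>1 \<omega>2 where
    w: "\<forall>k<Suc n0. \<omega>1 k = f (Suc n0) ! k" "\<forall>k\<le>n0. \<omega>1 k = \<omega>2 k" "P \<omega>1 \<noteq> P \<omega>2"
    by blast
  have a1: "\<forall>k\<le>n0. \<omega> k = \<omega>1 k" using w(1) wpre[of "Suc n0"] by auto
  have a2: "\<forall>k\<le>n0. \<omega> k = \<omega>2 k" using a1 w(2) by auto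
  have "P \<omega>1 = P \<omega>" using n0 a1 by blast
  moreover have "P \<omega>2 = P \<omega>" using n0 a2 by blast
  ultimately show False using w(3) by simp
qed

lemma map_eq_iff: "map \<omega> [0..<Suc n] = map \<omega>' [0..<Suc n] \<longleftrightarrow> (\<forall>k\<le>n. \<omega> k = \<omega>' k)"
  by (auto simp: map_eq_conv less_Suc_eq_le)

lemma upper_sub: "(\<Union>n. Omega - trunc (Omega - A) n) \<subseteq> A"
  unfolding trunc_def by blast

lemma trunc_sup: "A \<subseteq> Omega \<Longrightarrow> A \<subseteq> trunc A n"
  unfolding trunc_def by blast

lemma cyl_sub: "cylinders \<subseteq> lower_sets \<inter> upper_sets"
proof
  fix A assume "A \<in> cylinders"
  then obtain n E where nE: "n \<ge> 1" "A = {\<omega>\<in>Omega. map \<omega> [0..<Suc n] \<in> E}"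
    unfolding cylinders_def by blast
  have AO: "A \<subseteq> Omega" using nE by auto
  have "(\<Inter>m. trunc A m) \<subseteq> A"
  proof
    fix \<omega> assume "\<omega> \<in> (\<Inter>m. trunc A m)"
    then have "\<omega> \<in> trunc A n" by blast
    then obtain \<omega>' where "\<omega> \<in> Omega" "\<omega>' \<in> A" "\<forall>k\<le>n. \<omega>' k = \<omega> k" unfolding trunc_def by blast
    moreover then have "map \<omega>' [0..<Suc n] = map \<omega> [0..<Suc n]" using map_eq_iff[of \<omega>' n \<omega>] by blast
    ultimately show "\<omega> \<in> A" using nE by (simp del: upt_Suc)
  qed
  moreover have "A \<subseteq> (\<Inter>m. trunc A m)" using trunc_sup[OF AO] by blast
  moreover have "A \<subseteq> (\<Union>m. Omega - trunc (Omega - A) m)"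
  proof
    fix \<omega> assume wA: "\<omega> \<in> A"
    have "\<omega> \<notin> trunc (Omega - A) n"
    proof
      assume "\<omega> \<in> trunc (Omega - A) n"
      then obtain \<omega>' where "\<omega>' \<in> Omega" "\<omega>' \<notin> A" "\<forall>k\<le>n. \<omega>' k = \<omega> k" unfolding trunc_def by blast
      moreover then have "map \<omega>' [0..<Suc n] = map \<omega> [0..<Suc n]" using map_eq_iff[of \<omega>' n \<omega>] by blast
      ultimately show False using wA nE by (simp del: upt_Suc)
    qed
    then show "\<omega> \<in> (\<Union>m. Omega - trunc (Omega - A) m)" using wA AO by blast
  qed
  ultimately show "A \<in> lower_sets \<inter> upper_sets"
    unfolding lower_sets_def upper_sets_def using AO upper_sub[of A] by blast
qed

lemma clopen_cyl:
  assumes L: "A \<in> lower_sets" and U: "A \<in> upper_sets"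
  shows "A \<in> cylinders"
proof -
  have AO: "A \<subseteq> Omega" using L unfolding lower_sets_def by blast
  define P where "P \<omega> = (\<omega>(0 := False) \<in> A)" for \<omega> :: "nat \<Rightarrow> bool"
  have loc: "\<exists>n. \<forall>\<omega>'. (\<forall>k\<le>n. \<omega> k = \<omega>' k) \<longrightarrow> P \<omega>' = P \<omega>" for \<omega>
  proof -
    let ?w = "\<omega>(0 := False)"
    have wO: "?w \<in> Omega" unfolding Omega_def by simp
    have "\<exists>n. \<forall>\<omega>'\<in>Omega. (\<forall>k\<le>n. ?w k = \<omega>' k) \<longrightarrow> (\<omega>' \<in> A) = (?w \<in> A)"
    proof (cases "?w \<in> A")
      case True
      then have "?w \<in> (\<Union>n. Omega - trunc (Omega - A) n)" using U unfolding upper_sets_def by blast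
      then obtain n where "?w \<notin> trunc (Omega - A) n" by blast
      then have "\<forall>\<omega>'\<in>Omega. (\<forall>k\<le>n. ?w k = \<omega>' k) \<longrightarrow> \<omega>' \<in> A"
        using wO unfolding trunc_def by force
      then show ?thesis using True by blast
    next
      case False
      then have "?w \<notin> (\<Inter>n. trunc A n)" using L unfolding lower_sets_def by blast
      then obtain n where "?w \<notin> trunc A n" by blast
      then have "\<forall>\<omega>'\<in>Omega. (\<forall>k\<le>n. ?w k = \<omega>' k) \<longrightarrow> \<omega>' \<notin> A"
        using wO unfolding trunc_def by force
      then show ?thesis using False by blast
    qed
    then obtain n where n: "\<forall>\<omega>'\<in>Omega. (\<forall>k\<le>n. ?w k = \<omega>' k) \<longrightarrow> (\<omega>' \<in> A) = (?w \<in> A)" by blast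
    show ?thesis
    proof (intro exI allI impI)
      fix \<omega>' assume a: "\<forall>k\<le>n. \<omega> k = \<omega>' k"
      have "\<omega>'(0:=False) \<in> Omega" unfolding Omega_def by simp
      moreover have "\<forall>k\<le>n. ?w k = (\<omega>'(0:=False)) k" using a by simp
      ultimately show "P \<omega>' = P \<omega>" using n unfolding P_def by blast
    qed
  qed
  from unif_const[OF loc] obtain N where N: "\<forall>\<omega> \<omega>'. (\<forall>k\<le>N. \<omega> k = \<omega>' k) \<longrightarrow> P \<omega> = P \<omega>'" ..
  have PA: "\<omega> \<in> Omega \<Longrightarrow> P \<omega> = (\<omega> \<in> A)" for \<omega>
    unfolding P_def Omega_def by (simp add: fun_upd_idem)
  define n where "n = max N 1"
  define E where "E = (\<lambda>\<omega>. map \<omega> [0..<Suc n]) ` A"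
  have c1: "A = {\<omega>\<in>Omega. map \<omega> [0..<Suc n] \<in> E}"
  proof (intro equalityI subsetI)
    fix \<omega> assume "\<omega> \<in> A" then show "\<omega> \<in> {\<omega>\<in>Omega. map \<omega> [0..<Suc n] \<in> E}"
      using AO unfolding E_def by blast
  next
    fix \<omega> assume "\<omega> \<in> {\<omega>\<in>Omega. map \<omega> [0..<Suc n] \<in> E}"
    then obtain \<omega>' where w: "\<omega> \<in> Omega" "\<omega>' \<in> A" "map \<omega> [0..<Suc n] = map \<omega>' [0..<Suc n]"
      unfolding E_def by blast
    then have "\<forall>k\<le>N. \<omega> k = \<omega>' k" using map_eq_iff[of \<omega> n \<omega>'] unfolding n_def by auto
    then have "P \<omega> = P \<omega>'" using N by blast
    then show "\<omega> \<in> A" using PA w AO by blast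
  qed
  have c2: "\<forall>s\<in>E. length s = Suc n \<and> s ! 0 = False"
    using AO unfolding E_def Omega_def by (auto simp del: upt_Suc simp add: nth_map)
  have c3: "n \<ge> 1" unfolding n_def by simp
  show ?thesis unfolding cylinders_def
    by (rule CollectI, rule exI[of _ n], rule exI[of _ E], intro conjI c3 c2 c1)
qed

theorem corollary4p3:
  shows "lower_sets \<inter> upper_sets = cylinders \<and>
    (\<forall>A. A \<subseteq> Omega \<and> A \<in> lower_sets \<and> Omega - A \<in> lower_sets \<longrightarrow> A \<in> cylinders)"
proof (intro conjI allI impI)
  show "lower_sets \<inter> upper_sets = cylinders"
  proof (rule equalityI[OF _ cyl_sub])
    show "lower_sets \<inter> upper_sets \<subseteq> cylinders"
    proof
      fix A assume "A \<in> lower_sets \<inter> upper_sets"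
      then show "A \<in> cylinders" using clopen_cyl[of A] by (simp only: Int_iff)
    qed
  qed
next
  fix A assume a: "A \<subseteq> Omega \<and> A \<in> lower_sets \<and> Omega - A \<in> lower_sets"
  have eq: "Omega - A = (\<Inter>n. trunc (Omega - A) n)" using a unfolding lower_sets_def by blast
  have "A = Omega - (Omega - A)" using a by blast
  also have "\<dots> = Omega - (\<Inter>n. trunc (Omega - A) n)" using eq by (rule arg_cong)
  also have "\<dots> = (\<Union>n. Omega - trunc (Omega - A) n)" by blast
  finally have "A = (\<Union>n. Omega - trunc (Omega - A) n)" .
  then have "A \<in> upper_sets" using a unfolding upper_sets_def by blast
  moreover have "A \<in> lower_sets" using a by (rule conjunct1[OF conjunct2])
  ultimately show "A \<in> cylinders" using clopen_cyl by simp
qed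

end
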